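(* Let $T=(V_T,E_T)$ be a finite tree, $r\in V_T$, and $Q\subseteq V_T$ non-empty. Root $T$ at $r$, let $V_Q$ be the set of nodes whose subtree contains a node of $Q$, $T_Q$ the subtree induced by $V_Q$, $A_Q=\{u\in V_Q:\deg_{T_Q}(u)\ge 3\}$ and $Q'=Q\cup A_Q$. Let $Z=(V_Z,E_Z)$ be a connected subgraph of $T$ with $Q'\cap V_Z\ne\emptyset$. Then $Z$ has one or two $(Q'\cap V_Z)$-centroids.
   Context: For a tree $Z$ and a set $Q\subseteq V_Z$, a node $u\in Q$ is a $Q$-centroid of $Z$ if every connected component of $Z-u$ contains at most $|Q|/2$ nodes of $Q$. *)

theory Defs
  imports Complex_Main
begin

definition ugraph :: "'a set \<Rightarrow> 'a set set \<Rightarrow> bool" where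
  "ugraph V E \<longleftrightarrow> finite V \<and>
     (\<forall>e\<in>E. \<exists>u v. e = {u, v} \<and> u \<noteq> v \<and> u \<in> V \<and> v \<in> V)"

definition walk :: "'a set \<Rightarrow> 'a set set \<Rightarrow> 'a list \<Rightarrow> bool" where
  "walk V E xs \<longleftrightarrow> xs \<noteq> [] \<and> set xs \<subseteq> V \<and>
     (\<forall>i. Suc i < length xs \<longrightarrow> {xs ! i, xs ! Suc i} \<in> E)"

definition is_path :: "'a set \<Rightarrow> 'a set set \<Rightarrow> 'a \<Rightarrow> 'a \<Rightarrow> 'a list \<Rightarrow> bool" where
  "is_path V E u v xs \<longleftrightarrow> walk V E xs \<and> distinct xs \<and> hd xs = u \<and> last xs = v"

definition reachable :: "'a set \<Rightarrow> 'a set set \<Rightarrow> 'a \<Rightarrow> 'a \<Rightarrow> bool" where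
  "reachable V E u v \<longleftrightarrow> (\<exists>xs. walk V E xs \<and> hd xs = u \<and> last xs = v)"

definition connected_graph :: "'a set \<Rightarrow> 'a set set \<Rightarrow> bool" where
  "connected_graph V E \<longleftrightarrow> V \<noteq> {} \<and> (\<forall>u\<in>V. \<forall>v\<in>V. reachable V E u v)"

definition is_cycle :: "'a set \<Rightarrow> 'a set set \<Rightarrow> 'a list \<Rightarrow> bool" where
  "is_cycle V E xs \<longleftrightarrow> walk V E xs \<and> distinct xs \<and> length xs \<ge> 3 \<and> {last xs, hd xs} \<in> E"

definition tree :: "'a set \<Rightarrow> 'a set set \<Rightarrow> bool" where
  "tree V E \<longleftrightarrow> ugraph V E \<and> connected_graph V E \<and> \<not> (\<exists>xs. is_cycle V E xs)"

definition connected_subgraph :: "'a set \<Rightarrow> 'a set set \<Rightarrow> 'a set \<Rightarrow> 'a set set \<Rightarrow> bool" where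
  "connected_subgraph V E VZ EZ \<longleftrightarrow> VZ \<subseteq> V \<and> EZ \<subseteq> E \<and> ugraph VZ EZ \<and> connected_graph VZ EZ"

text \<open>Rooting at r: the subtree of u consists of the nodes w such that u lies on the
  (unique) path from r to w.\<close>
definition subtree_nodes :: "'a set \<Rightarrow> 'a set set \<Rightarrow> 'a \<Rightarrow> 'a \<Rightarrow> 'a set" where
  "subtree_nodes V E r u = {w \<in> V. \<forall>xs. is_path V E r w xs \<longrightarrow> u \<in> set xs}"

definition V_Q :: "'a set \<Rightarrow> 'a set set \<Rightarrow> 'a \<Rightarrow> 'a set \<Rightarrow> 'a set" where
  "V_Q V E r Q = {u \<in> V. subtree_nodes V E r u \<inter> Q \<noteq> {}}"

definition induced_edges :: "'a set set \<Rightarrow> 'a set \<Rightarrow> 'a set set" where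
  "induced_edges E W = {e \<in> E. e \<subseteq> W}"

definition degree :: "'a set \<Rightarrow> 'a set set \<Rightarrow> 'a \<Rightarrow> nat" where
  "degree V E u = card {v \<in> V. {u, v} \<in> E}"

definition A_Q :: "'a set \<Rightarrow> 'a set set \<Rightarrow> 'a \<Rightarrow> 'a set \<Rightarrow> 'a set" where
  "A_Q V E r Q = {u \<in> V_Q V E r Q.
      degree (V_Q V E r Q) (induced_edges E (V_Q V E r Q)) u \<ge> 3}"

definition components :: "'a set \<Rightarrow> 'a set set \<Rightarrow> 'a set set" where
  "components V E = (\<lambda>v. {w \<in> V. reachable V E v w}) ` V"

definition delete_vertex_edges :: "'a set set \<Rightarrow> 'a \<Rightarrow> 'a set set" where
  "delete_vertex_edges E u = {e \<in> E. u \<notin> e}"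

definition is_Q_centroid :: "'a set \<Rightarrow> 'a set set \<Rightarrow> 'a set \<Rightarrow> 'a \<Rightarrow> bool" where
  "is_Q_centroid VZ EZ Q u \<longleftrightarrow> u \<in> Q \<and> u \<in> VZ \<and>
     (\<forall>C \<in> components (VZ - {u}) (delete_vertex_edges EZ u).
        real (card (C \<inter> Q)) \<le> real (card Q) / 2)"

end

theory Submission
  imports Defs
begin


lemma walk_single[simp]: "walk V E [x] \<longleftrightarrow> x \<in> V"
  by (auto simp: walk_def)

lemma walk_Cons2[simp]: "walk V E (x#y#xs) \<longleftrightarrow> x \<in> V \<and> {x,y} \<in> E \<and> walk V E (y#xs)"
proof
  assume a: "walk V E (x#y#xs)"
  have "{x,y} \<in> E" using a unfolding walk_def by (metis length_Cons nth_Cons_0 nth_Cons_Suc zero_less_Suc Suc_less_eq)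
  moreover have "walk V E (y#xs)" unfolding walk_def
  proof (intro conjI allI impI)
    fix i assume "Suc i < length (y#xs)"
    then have "Suc (Suc i) < length (x#y#xs)" by simp
    then have "{(x#y#xs) ! Suc i, (x#y#xs) ! Suc (Suc i)} \<in> E" using a unfolding walk_def by blast
    then show "{(y#xs) ! i, (y#xs) ! Suc i} \<in> E" by simp
  qed (use a in \<open>auto simp: walk_def\<close>)
  ultimately show "x \<in> V \<and> {x,y} \<in> E \<and> walk V E (y#xs)" using a by (auto simp: walk_def)
next
  assume a: "x \<in> V \<and> {x,y} \<in> E \<and> walk V E (y#xs)"
  show "walk V E (x#y#xs)" unfolding walk_def
  proof (intro conjI allI impI)
    fix i assume "Suc i < length (x#y#xs)"
    then show "{(x#y#xs) ! i, (x#y#xs) ! Suc i} \<in> E"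
      using a by (cases i) (auto simp: walk_def)
  qed (use a in \<open>auto simp: walk_def\<close>)
qed

lemma walk_Nil[simp]: "\<not> walk V E []" by (simp add: walk_def)

lemma walk_ConsD: "walk V E (x#xs) \<Longrightarrow> xs \<noteq> [] \<Longrightarrow> walk V E xs"
  by (cases xs) auto

lemma walk_join: "walk V E xs \<Longrightarrow> walk V E ys \<Longrightarrow> last xs = hd ys \<Longrightarrow> walk V E (xs @ tl ys)"
proof (induction xs rule: induct_list012)
  case 1 then show ?case by simp
next
  case (2 x) then show ?case by (cases ys) auto
next
  case (3 x y zs)
  then show ?case by auto
qed

lemma walk_suffix: "walk V E (xs @ ys) \<Longrightarrow> ys \<noteq> [] \<Longrightarrow> walk V E ys"
  by (induction xs) (auto dest: walk_ConsD)

lemma walk_prefix: "walk V E (xs @ ys) \<Longrightarrow> xs \<noteq> [] \<Longrightarrow> walk V E xs"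
proof (induction xs rule: induct_list012)
  case (2 x) then show ?case by (cases ys) auto
next
  case (3 x y zs) then show ?case by auto
qed simp

lemma walk_snoc: "walk V E xs \<Longrightarrow> {last xs, y} \<in> E \<Longrightarrow> y \<in> V \<Longrightarrow> walk V E (xs @ [y])"
proof -
  assume a: "walk V E xs" "{last xs, y} \<in> E" "y \<in> V"
  have "last xs \<in> V" using a(1) unfolding walk_def by auto
  then show ?thesis using walk_join[of V E xs "[last xs, y]"] a by auto
qed

lemma walk_rev: "walk V E xs \<Longrightarrow> walk V E (rev xs)"
proof (induction xs rule: induct_list012)
  case (3 x y zs)
  then have "walk V E (rev zs @ [y])" by auto
  then have "walk V E (rev zs @ [y] @ [x])"
    using walk_snoc[of V E "rev zs @ [y]" x] 3 by (auto simp: insert_commute)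
  then show ?case by simp
qed auto

lemma walk_mono: "walk V E xs \<Longrightarrow> V \<subseteq> V' \<Longrightarrow> E \<subseteq> E' \<Longrightarrow> walk V' E' xs"
  by (auto simp: walk_def)

lemma walk_del: "walk V E xs \<Longrightarrow> u \<notin> set xs \<Longrightarrow> walk (V - {u}) (delete_vertex_edges E u) xs"
  unfolding walk_def delete_vertex_edges_def
proof (intro conjI allI impI; (elim conjE)?)
  fix i assume a: "xs \<noteq> []" "set xs \<subseteq> V" "\<forall>i. Suc i < length xs \<longrightarrow> {xs ! i, xs ! Suc i} \<in> E" "u \<notin> set xs" "Suc i < length xs"
  then have "xs ! i \<in> set xs" "xs ! Suc i \<in> set xs" by auto
  then show "{xs ! i, xs ! Suc i} \<in> {e \<in> E. u \<notin> e}" using a by auto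
qed auto

lemma walk_to_path: "walk V E xs \<Longrightarrow> \<exists>ys. walk V E ys \<and> distinct ys \<and> hd ys = hd xs \<and> last ys = last xs"
proof (induction xs)
  case Nil then show ?case by simp
next
  case (Cons x xs)
  show ?case
  proof (cases "xs = []")
    case True
    have "walk V E [x]" using Cons.prems True by simp
    then show ?thesis using True by (intro exI[of _ "[x]"]) simp
  next
    case False
    have wx: "walk V E xs" by (rule walk_ConsD[OF Cons.prems False])
    from Cons.IH[OF wx] obtain ys where ys: "walk V E ys" "distinct ys" "hd ys = hd xs" "last ys = last xs" by blast
    have ysne: "ys \<noteq> []" using ys(1) by auto
    show ?thesis
    proof (cases "x \<in> set ys")
      case True
      then obtain p s where ps: "ys = p @ x # s" by (meson split_list)
      show ?thesis
        apply (intro exI[of _ "x#s"])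
        using ys ps False walk_suffix[of V E p "x#s"] by auto
    next
      case f2: False
      have "xs = hd xs # tl xs" "ys = hd ys # tl ys" using False ysne by auto
      then have "walk V E (x # ys)" using Cons.prems ys(1,3)
        by (metis walk_Cons2)
      then show ?thesis using ys f2 ysne False by (intro exI[of _ "x#ys"]) auto
    qed
  qed
qed



definition br :: "'a set \<Rightarrow> 'a set set \<Rightarrow> 'a \<Rightarrow> 'a \<Rightarrow> 'a set" where
  "br V E u v = {w \<in> V - {u}. reachable (V - {u}) (delete_vertex_edges E u) v w}"

lemma walk_set: "walk V E xs \<Longrightarrow> set xs \<subseteq> V" by (simp add: walk_def)

lemma walk_hd: "walk V E xs \<Longrightarrow> hd xs \<in> V" by (auto simp: walk_def)

lemma reach_refl: "x \<in> V \<Longrightarrow> reachable V E x x"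
  unfolding reachable_def by (intro exI[of _ "[x]"]) auto

lemma reach_sym: "reachable V E x y \<Longrightarrow> reachable V E y x"
  unfolding reachable_def using walk_rev
  by (metis hd_rev last_rev)

lemma reach_trans: "reachable V E x y \<Longrightarrow> reachable V E y z \<Longrightarrow> reachable V E x z"
  unfolding reachable_def
proof (elim exE conjE)
  fix xs ys assume a: "walk V E xs" "hd xs = x" "last xs = y" "walk V E ys" "hd ys = y" "last ys = z"
  have w: "walk V E (xs @ tl ys)" using walk_join a by metis
  have ne: "xs \<noteq> []" "ys \<noteq> []" using a by auto
  have "last (xs @ tl ys) = z"
  proof (cases "tl ys = []")
    case True then have "ys = [hd ys]" using ne by (metis list.collapse)
    then show ?thesis using a True by (metis append_Nil2 last_ConsL)
  next
    case False then show ?thesis using a ne by (metis last_append last_tl)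
  qed
  then show "\<exists>xs. walk V E xs \<and> hd xs = x \<and> last xs = z" using w a ne by (intro exI[of _ "xs @ tl ys"]) auto
qed

lemma br_sub: "br V E u v \<subseteq> V - {u}" by (auto simp: br_def)

lemma br_self: "v \<in> V \<Longrightarrow> v \<noteq> u \<Longrightarrow> v \<in> br V E u v"
  by (auto simp: br_def intro: reach_refl)

lemma br_eq: "w \<in> br V E u v \<Longrightarrow> br V E u w = br V E u v"
  unfolding br_def by (auto intro: reach_trans reach_sym)

lemma br_closed: "a \<in> br V E u v \<Longrightarrow> {a,b} \<in> E \<Longrightarrow> b \<in> V \<Longrightarrow> b \<noteq> u \<Longrightarrow> b \<in> br V E u v"
proof -
  assume a: "a \<in> br V E u v" "{a,b} \<in> E" "b \<in> V" "b \<noteq> u"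
  have "a \<noteq> u" "a \<in> V" using a(1) br_sub[of V E u v] by auto
  then have "walk (V - {u}) (delete_vertex_edges E u) [a,b]"
    using a by (auto simp: delete_vertex_edges_def)
  then have "reachable (V - {u}) (delete_vertex_edges E u) a b"
    unfolding reachable_def by (intro exI[of _ "[a,b]"]) auto
  then show ?thesis using a(1) a(3,4) unfolding br_def by (auto intro: reach_trans)
qed

lemma br_mono: "V \<subseteq> V' \<Longrightarrow> E \<subseteq> E' \<Longrightarrow> br V E u v \<subseteq> br V' E' u v"
proof
  fix w assume a: "V \<subseteq> V'" "E \<subseteq> E'" "w \<in> br V E u v"
  then obtain xs where xs: "walk (V - {u}) (delete_vertex_edges E u) xs" "hd xs = v" "last xs = w"
    unfolding br_def reachable_def by auto
  have "walk (V' - {u}) (delete_vertex_edges E' u) xs"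
    by (rule walk_mono[OF xs(1)]) (use a(1,2) in \<open>auto simp: delete_vertex_edges_def\<close>)
  then show "w \<in> br V' E' u v" using xs a unfolding br_def reachable_def by auto
qed

lemma components_eq: "components (V - {u}) (delete_vertex_edges E u) = br V E u ` (V - {u})"
  unfolding components_def br_def by simp

lemma edge_props:
  assumes "ugraph V E" "{a,b} \<in> E" shows "a \<noteq> b \<and> a \<in> V \<and> b \<in> V"
proof -
  obtain u v where "{a,b} = {u,v}" "u \<noteq> v" "u \<in> V" "v \<in> V" using assms unfolding ugraph_def by blast
  then show ?thesis by (metis doubleton_eq_iff insert_absorb2 singleton_insert_inj_eq)
qed

lemma bridge:
  assumes ug: "ugraph V E" and ac: "\<not> (\<exists>xs. is_cycle V E xs)"
    and e: "{u,x} \<in> E" and w: "walk V (E - {{u,x}}) xs" and h: "hd xs = x" "last xs = u"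
  shows False
proof -
  have ux: "u \<noteq> x" using edge_props[OF ug e] by auto
  obtain ys where ys: "walk V (E - {{u,x}}) ys" "distinct ys" "hd ys = x" "last ys = u"
    using walk_to_path[OF w] h by auto
  have wE: "walk V E ys" by (rule walk_mono[OF ys(1)]) auto
  show False
  proof (cases ys)
    case Nil then show ?thesis using ys by simp
  next
    case (Cons a r)
    show ?thesis
    proof (cases r)
      case Nil then show ?thesis using ys Cons ux by simp
    next
      case (Cons b r2)
      show ?thesis
      proof (cases r2)
        case Nil
        then have "{x,u} \<in> E - {{u,x}}" using ys \<open>ys = a # r\<close> Cons by auto
        then show ?thesis by (auto simp: insert_commute)
      next
        case (Cons c r3)
        have "is_cycle V E ys" unfolding is_cycle_def
          using wE ys e \<open>ys = a # r\<close> \<open>r = b # r2\<close> Cons by auto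
        then show ?thesis using ac by blast
      qed
    qed
  qed
qed

lemma del_sub: "x \<in> e0 \<Longrightarrow> delete_vertex_edges E x \<subseteq> E - {e0}"
  by (auto simp: delete_vertex_edges_def)

lemma NC:
  assumes ug: "ugraph V E" and ac: "\<not> (\<exists>xs. is_cycle V E xs)"
    and e: "{x,a} \<in> E" "{x,b} \<in> E" "a \<noteq> b" "b \<in> br V E x a"
  shows False
proof -
  obtain ws where ws: "walk (V - {x}) (delete_vertex_edges E x) ws" "hd ws = a" "last ws = b"
    using e(4) unfolding br_def reachable_def by auto
  have w1: "walk V (E - {{x,a}}) ws" by (rule walk_mono[OF ws(1)]) (use del_sub[of x "{x,a}" E] in auto)
  have bx: "b \<noteq> x" using e(4) br_sub by fastforce
  have "{b,x} \<noteq> {x,a}" using bx e(3) by (metis doubleton_eq_iff)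
  then have "{last ws, x} \<in> E - {{x,a}}" using e(2) ws(3) by (auto simp: insert_commute)
  then have "walk V (E - {{x,a}}) (ws @ [x])" using walk_snoc[OF w1] edge_props[OF ug e(1)] by auto
  moreover have "hd (ws @ [x]) = a" using ws by (cases ws) auto
  ultimately show False using bridge[OF ug ac e(1), of "ws @ [x]"] by simp
qed

lemma DISJ:
  assumes ug: "ugraph V E" and ac: "\<not> (\<exists>xs. is_cycle V E xs)"
    and e: "{u,x} \<in> E" "w \<in> br V E u x" "w \<in> br V E x u"
  shows False
proof -
  have "reachable (V - {u}) (delete_vertex_edges E u) x w"
       "reachable (V - {x}) (delete_vertex_edges E x) w u"
    using e unfolding br_def by (auto intro: reach_sym)
  then obtain p q where p: "walk (V - {u}) (delete_vertex_edges E u) p" "hd p = x" "last p = w"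
    and q: "walk (V - {x}) (delete_vertex_edges E x) q" "hd q = w" "last q = u"
    unfolding reachable_def by blast
  have "walk V (E - {{u,x}}) p" by (rule walk_mono[OF p(1)]) (use del_sub[of u "{u,x}" E] in auto)
  moreover have "walk V (E - {{u,x}}) q" by (rule walk_mono[OF q(1)]) (use del_sub[of x "{u,x}" E] in auto)
  ultimately have "reachable V (E - {{u,x}}) x w" "reachable V (E - {{u,x}}) w u"
    unfolding reachable_def using p q by blast+
  then have "reachable V (E - {{u,x}}) x u" by (rule reach_trans)
  then show False using bridge[OF ug ac e(1)] unfolding reachable_def by blast
qed

lemma UNION_walk:
  assumes "walk V E xs" "last xs = v" "u \<in> V" "v \<in> V" "u \<noteq> v"
  shows "hd xs \<in> br V E u v \<union> br V E v u"
  using assms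
proof (induction xs rule: induct_list012)
  case (2 x) then show ?case using br_self by fastforce
next
  case (3 a b zs)
  then have ih: "b \<in> br V E u v \<union> br V E v u" by auto
  have e: "{b,a} \<in> E" "a \<in> V" using 3 by (auto simp: insert_commute)
  show ?case
  proof (cases "a = u")
    case True then show ?thesis using br_self 3 by fastforce
  next
    case f1: False
    show ?thesis
    proof (cases "a = v")
      case True then show ?thesis using br_self 3 by fastforce
    next
      case False then show ?thesis using ih br_closed[OF _ e(1) e(2)] f1 by auto
    qed
  qed
qed simp

lemma UNION:
  assumes "connected_graph V E" "u \<in> V" "v \<in> V" "u \<noteq> v" "w \<in> V"
  shows "w \<in> br V E u v \<union> br V E v u"
proof -
  obtain xs where "walk V E xs" "hd xs = w" "last xs = v"
    using assms unfolding connected_graph_def reachable_def by blast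
  then show ?thesis using UNION_walk assms by metis
qed

lemma NBR_walk:
  assumes "walk V E xs" "last xs = x" "hd xs \<noteq> x"
  shows "\<exists>y. {x,y} \<in> E \<and> y \<in> br V E x (hd xs)"
  using assms
proof (induction xs rule: induct_list012)
  case (3 a b zs)
  show ?case
  proof (cases "b = x")
    case True
    then show ?thesis using 3 br_self[of a V x E] by (auto simp: insert_commute)
  next
    case False
    then obtain y where y: "{x,y} \<in> E" "y \<in> br V E x b" using 3 by auto
    have bV: "b \<in> V" using walk_hd[of V E "b#zs"] 3 by auto
    have "b \<in> br V E x a" using br_closed[of a V E x a b] br_self[of a V x E] 3 False bV by auto
    then show ?thesis using y br_eq by fastforce
  qed
qed auto

lemma NBR:
  assumes "connected_graph V E" "v \<in> V" "v \<noteq> x" "x \<in> V"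
  shows "\<exists>y. {x,y} \<in> E \<and> y \<in> br V E x v"
proof -
  obtain xs where "walk V E xs" "hd xs = v" "last xs = x"
    using assms unfolding connected_graph_def reachable_def by blast
  then show ?thesis using NBR_walk assms by metis
qed

lemma ENTRY:
  assumes ug: "ugraph V E" and ac: "\<not> (\<exists>xs. is_cycle V E xs)"
    and e: "{x,y} \<in> E"
  shows "walk V E xs \<Longrightarrow> hd xs \<notin> br V E x y \<Longrightarrow> last xs \<in> br V E x y \<Longrightarrow> x \<in> set xs \<and> y \<in> set xs"
proof (induction xs rule: induct_list012)
  case (3 a b zs)
  show ?case
  proof (cases "b \<in> br V E x y")
    case False then show ?thesis using 3 by auto
  next
    case True
    have ax: "a = x" using br_closed[OF True, of a] 3 by (auto simp: insert_commute)
    have "b = y" using NC[OF ug ac e, of b] 3 ax True by auto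
    then show ?thesis using ax by simp
  qed
qed auto



lemma tree_ug: "tree V E \<Longrightarrow> ugraph V E" by (simp add: tree_def)
lemma tree_ac: "tree V E \<Longrightarrow> \<not> (\<exists>xs. is_cycle V E xs)" by (simp add: tree_def)
lemma tree_conn: "tree V E \<Longrightarrow> connected_graph V E" by (simp add: tree_def)

lemma sub_ac:
  assumes "tree V E" "connected_subgraph V E W F"
  shows "\<not> (\<exists>xs. is_cycle W F xs)"
proof
  assume "\<exists>xs. is_cycle W F xs"
  then obtain xs where c: "is_cycle W F xs" by blast
  have "W \<subseteq> V" "F \<subseteq> E" using assms(2) by (auto simp: connected_subgraph_def)
  then have "walk V E xs" using c unfolding is_cycle_def by (meson walk_mono)
  then have "is_cycle V E xs" using c \<open>F \<subseteq> E\<close> unfolding is_cycle_def by blast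
  then show False using assms(1) tree_ac by blast
qed

lemma S_path_exists:
  assumes "tree V E" "w \<in> V" "r \<in> V" shows "\<exists>ps. is_path V E r w ps"
proof -
  obtain xs where "walk V E xs" "hd xs = r" "last xs = w"
    using assms tree_conn unfolding connected_graph_def reachable_def by blast
  then show ?thesis using walk_to_path unfolding is_path_def by metis
qed

lemma S_self: "q \<in> V \<Longrightarrow> q \<in> subtree_nodes V E r q"
  unfolding subtree_nodes_def is_path_def by (auto simp: walk_def)

lemma S_trans:
  assumes "u \<in> subtree_nodes V E r y"
  shows "subtree_nodes V E r u \<subseteq> subtree_nodes V E r y"
proof
  fix w assume w: "w \<in> subtree_nodes V E r u"
  have "y \<in> set ps" if ps: "is_path V E r w ps" for ps
  proof -
    have "u \<in> set ps" using w ps unfolding subtree_nodes_def by auto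
    then obtain p s where pe: "ps = p @ u # s" by (meson split_list)
    have "walk V E ((p @ [u]) @ s)" using ps pe unfolding is_path_def by simp
    then have "walk V E (p @ [u])" using walk_prefix by blast
    moreover have "distinct (p @ [u])" using ps pe unfolding is_path_def by simp
    moreover have "hd (p @ [u]) = r" using ps pe unfolding is_path_def by (cases p) auto
    ultimately have "is_path V E r u (p @ [u])" unfolding is_path_def by simp
    then have "y \<in> set (p @ [u])" using assms unfolding subtree_nodes_def by blast
    then show ?thesis using pe by auto
  qed
  then show "w \<in> subtree_nodes V E r y" using w unfolding subtree_nodes_def by auto
qed

lemma S_child:
  assumes "tree V E" "{x,y} \<in> E" "r \<notin> br V E x y" "w \<in> br V E x y"
  shows "w \<in> subtree_nodes V E r y \<and> w \<in> subtree_nodes V E r x"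
proof -
  have "w \<in> V" using assms(4) br_sub by fastforce
  moreover have "y \<in> set ps \<and> x \<in> set ps" if "is_path V E r w ps" for ps
    using ENTRY[OF tree_ug[OF assms(1)] tree_ac[OF assms(1)] assms(2), of ps] that assms(3,4)
    unfolding is_path_def by auto
  ultimately show ?thesis unfolding subtree_nodes_def by blast
qed

lemma Q_VQ: "Q \<subseteq> V \<Longrightarrow> Q \<subseteq> V_Q V E r Q"
proof
  fix q assume "Q \<subseteq> V" "q \<in> Q"
  then have qV: "q \<in> V" by blast
  then have "q \<in> subtree_nodes V E r q" by (rule S_self)
  then show "q \<in> V_Q V E r Q" unfolding V_Q_def using qV \<open>q \<in> Q\<close> by blast
qed

lemma A_VQ: "A_Q V E r Q \<subseteq> V_Q V E r Q"
  unfolding A_Q_def by auto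

lemma parent_st:
  assumes "tree V E" "{x,p} \<in> E" "r \<in> br V E x p"
  shows "x \<in> subtree_nodes V E r p"
proof -
  have ug: "ugraph V E" and ac: "\<not> (\<exists>xs. is_cycle V E xs)" using tree_ug[OF assms(1)] tree_ac[OF assms(1)] by auto
  have "r \<notin> br V E p x" using DISJ[OF ug ac assms(2) assms(3)] by blast
  moreover have "{p,x} \<in> E" using assms(2) by (simp add: insert_commute)
  moreover have "x \<in> br V E p x" using edge_props[OF ug assms(2)] br_self by metis
  ultimately show ?thesis using S_child[OF assms(1)] by blast
qed

lemma parent_unique:
  assumes "tree V E" "{x,p1} \<in> E" "{x,p2} \<in> E" "r \<in> br V E x p1" "r \<in> br V E x p2"
  shows "p1 = p2"
proof (rule ccontr)
  assume ne: "p1 \<noteq> p2"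
  have ug: "ugraph V E" and ac: "\<not> (\<exists>xs. is_cycle V E xs)" using tree_ug[OF assms(1)] tree_ac[OF assms(1)] by auto
  have "br V E x p1 = br V E x p2" using br_eq assms(4,5) by metis
  moreover have "p2 \<in> br V E x p2" using edge_props[OF ug assms(3)] br_self by metis
  ultimately show False using NC[OF ug ac assms(2,3) ne] by simp
qed

lemma VQ_up:
  assumes "u \<in> subtree_nodes V E r y" "u \<in> V_Q V E r Q" "y \<in> V"
  shows "y \<in> V_Q V E r Q"
  using S_trans[OF assms(1)] assms(2,3) unfolding V_Q_def by auto

lemma H:
  assumes T: "tree V E" and rV: "r \<in> V" and QV: "Q \<subseteq> V"
    and Z: "connected_subgraph V E W F"
    and xW: "x \<in> W" and xQ: "x \<notin> Q \<union> A_Q V E r Q"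
    and P: "P = (Q \<union> A_Q V E r Q) \<inter> W"
  shows "card {C \<in> components (W - {x}) (delete_vertex_edges F x). C \<inter> P \<noteq> {}} \<le> 2"
proof -
  have ug: "ugraph V E" and ac: "\<not> (\<exists>xs. is_cycle V E xs)" using tree_ug[OF T] tree_ac[OF T] by auto
  have WV: "W \<subseteq> V" and FE: "F \<subseteq> E" and ugZ: "ugraph W F" and cZ: "connected_graph W F"
    using Z by (auto simp: connected_subgraph_def)
  have finV: "finite V" using ug by (simp add: ugraph_def)
  have finW: "finite W" using ugZ by (simp add: ugraph_def)
  define VQ where "VQ = V_Q V E r Q"
  have PVQ: "P \<subseteq> VQ" using P Q_VQ[OF QV, of E r] A_VQ[of V E r Q] VQ_def by blast
  define Y where "Y = {y. {x,y} \<in> F \<and> br W F x y \<inter> P \<noteq> {}}"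
  define Y' where "Y' = (if x \<in> VQ then {v \<in> VQ. {x,v} \<in> induced_edges E VQ}
                         else {y. {x,y} \<in> E \<and> r \<in> br V E x y})"
  have K: "{C \<in> components (W - {x}) (delete_vertex_edges F x). C \<inter> P \<noteq> {}} \<subseteq> br W F x ` Y"
  proof
    fix C assume "C \<in> {C \<in> components (W - {x}) (delete_vertex_edges F x). C \<inter> P \<noteq> {}}"
    then obtain v where v: "v \<in> W - {x}" "C = br W F x v" "C \<inter> P \<noteq> {}"
      unfolding components_eq by auto
    obtain y where y: "{x,y} \<in> F" "y \<in> br W F x v" using NBR[OF cZ _ _ xW] v by auto
    have "br W F x y = C" using br_eq[OF y(2)] v by simp
    then show "C \<in> br W F x ` Y" using y v unfolding Y_def by auto
  qed
  have YY: "Y \<subseteq> Y'"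
  proof
    fix y assume "y \<in> Y"
    then obtain q where yF: "{x,y} \<in> F" and q: "q \<in> br W F x y" "q \<in> P" unfolding Y_def by auto
    have yE: "{x,y} \<in> E" using yF FE by auto
    have yV: "y \<in> V" and xV: "x \<in> V" using edge_props[OF ug yE] by auto
    have qT: "q \<in> br V E x y" using br_mono[OF WV FE] q(1) by auto
    have qVQ: "q \<in> VQ" using q(2) PVQ by auto
    show "y \<in> Y'"
    proof (cases "r \<in> br V E x y")
      case True
      have "x \<in> VQ \<Longrightarrow> y \<in> VQ" using parent_st[OF T yE True] VQ_up yV VQ_def by metis
      then show ?thesis using True yE qVQ unfolding Y'_def induced_edges_def
        by (auto simp: VQ_def V_Q_def)
    next
      case False
      have c: "q \<in> subtree_nodes V E r y" "y \<in> subtree_nodes V E r x"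
        using S_child[OF T yE False] qT br_self[OF yV] edge_props[OF ug yE] by auto
      have "y \<in> VQ" using VQ_up[OF c(1)] qVQ yV VQ_def by metis
      moreover have "x \<in> VQ" using VQ_up[OF c(2)] calculation xV VQ_def by metis
      ultimately show ?thesis unfolding Y'_def induced_edges_def using yE by auto
    qed
  qed
  have finY': "finite Y'"
  proof -
    have "Y' \<subseteq> V" unfolding Y'_def VQ_def V_Q_def induced_edges_def
      using edge_props[OF ug] by auto
    then show ?thesis using finV finite_subset by blast
  qed
  have cY': "card Y' \<le> 2"
  proof (cases "x \<in> VQ")
    case True
    then have "\<not> 3 \<le> degree VQ (induced_edges E VQ) x" using xQ unfolding A_Q_def VQ_def by auto
    then show ?thesis using True unfolding Y'_def degree_def by simp
  next
    case False
    have "card Y' \<le> Suc 0" unfolding card_le_Suc0_iff_eq[OF finY']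
      using False parent_unique[OF T] unfolding Y'_def by auto
    then show ?thesis by simp
  qed
  have "card {C \<in> components (W - {x}) (delete_vertex_edges F x). C \<inter> P \<noteq> {}} \<le> card (br W F x ` Y)"
    using K finY' YY by (meson card_mono finite_imageI finite_subset)
  also have "\<dots> \<le> card Y" using card_image_le finY' YY finite_subset by blast
  also have "\<dots> \<le> card Y'" using card_mono[OF finY' YY] .
  finally show ?thesis using cY' by simp
qed



lemma br_disj: "br V E u a \<noteq> br V E u b \<Longrightarrow> br V E u a \<inter> br V E u b = {}"
proof (rule equals0I)
  fix z assume ne: "br V E u a \<noteq> br V E u b" and z: "z \<in> br V E u a \<inter> br V E u b"
  then have "br V E u z = br V E u a" "br V E u z = br V E u b" using br_eq[of z V E u] by auto
  then show False using ne by simp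
qed

lemma rhalf: "(real a \<le> real b / 2) = (2 * a \<le> b)"
proof -
  have "(real a \<le> real b / 2) = (real (2*a) \<le> real b)" by (simp add: mult.commute)
  then show ?thesis by (simp only: of_nat_le_iff)
qed

context
  fixes W :: "'a set" and F :: "'a set set" and P :: "'a set"
  assumes ug: "ugraph W F" and cn: "connected_graph W F" and ac: "\<not> (\<exists>xs. is_cycle W F xs)"
    and PW: "P \<subseteq> W" and Pne: "P \<noteq> {}"
    and Hy: "\<And>x. x \<in> W \<Longrightarrow> x \<notin> P \<Longrightarrow>
       card {C \<in> components (W - {x}) (delete_vertex_edges F x). C \<inter> P \<noteq> {}} \<le> 2"
begin

lemma finW: "finite W" using ug by (simp add: ugraph_def)
lemma finP: "finite P" using finW PW finite_subset by blast
lemma finB: "finite (br W F u v)" using finW br_sub[of W F u v] finite_subset by blast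

lemma cent_iff: "is_Q_centroid W F P u \<longleftrightarrow> u \<in> P \<and> u \<in> W \<and>
   (\<forall>v \<in> W - {u}. 2 * card (br W F u v \<inter> P) \<le> card P)"
  unfolding is_Q_centroid_def components_eq rhalf by auto

lemma split_count:
  assumes "{u,x} \<in> F"
  shows "card (br W F u x \<inter> P) + card (br W F x u \<inter> P) = card P"
proof -
  have e: "u \<noteq> x" "u \<in> W" "x \<in> W" using edge_props[OF ug assms] by auto
  have "P = (br W F u x \<inter> P) \<union> (br W F x u \<inter> P)" using UNION[OF cn e(2,3,1)] PW by blast
  moreover have "(br W F u x \<inter> P) \<inter> (br W F x u \<inter> P) = {}" using DISJ[OF ug ac assms] by blast
  moreover have "card ((br W F u x \<inter> P) \<union> (br W F x u \<inter> P)) = card (br W F u x \<inter> P) + card (br W F x u \<inter> P)"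
    by (rule card_Un_disjoint) (use finP calculation(2) in auto)
  ultimately show ?thesis by simp
qed

lemma L:
  assumes xW: "x \<in> W" and xP: "x \<notin> P" and uW: "u \<in> W" "u \<noteq> x"
    and hu: "2 * card (br W F x u \<inter> P) \<le> card P"
  shows "\<exists>v \<in> W - {x}. br W F x v \<noteq> br W F x u \<and> card P \<le> 2 * card (br W F x v \<inter> P)"
proof -
  define K where "K = {C \<in> components (W - {x}) (delete_vertex_edges F x). C \<inter> P \<noteq> {}}"
  have Kc: "card K \<le> 2" using Hy[OF xW xP] K_def by simp
  have finK: "finite K" unfolding K_def components_eq using finW by auto
  have KB: "\<And>C. C \<in> K \<Longrightarrow> \<exists>v \<in> W - {x}. C = br W F x v" unfolding K_def components_eq by auto
  have PK: "P \<subseteq> \<Union>K"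
  proof
    fix p assume p: "p \<in> P"
    then have "p \<in> W - {x}" using PW xP by auto
    then have pb: "p \<in> br W F x p" using br_self by fastforce
    then have "br W F x p \<in> K" using p \<open>p \<in> W - {x}\<close>
      unfolding K_def components_eq by blast
    then show "p \<in> \<Union>K" using pb by blast
  qed
  have dj: "\<And>C1 C2. C1 \<in> K \<Longrightarrow> C2 \<in> K \<Longrightarrow> C1 \<noteq> C2 \<Longrightarrow> C1 \<inter> C2 = {}"
  proof -
    fix C1 C2 assume c: "C1 \<in> K" "C2 \<in> K" "C1 \<noteq> C2"
    obtain a where a: "C1 = br W F x a" using KB[OF c(1)] by blast
    obtain b where b: "C2 = br W F x b" using KB[OF c(2)] by blast
    show "C1 \<inter> C2 = {}" using br_disj[of W F x a b] a b c(3) by simp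
  qed
  have cP: "card P > 0" using Pne finP by auto
  show ?thesis
  proof (cases "card K")
    case 0 then have "K = {}" using finK by simp
    then have "P = {}" using PK by blast
    with Pne show ?thesis by (rule notE)
  next
    case (Suc n)
    show ?thesis
    proof (cases n)
      case 0
      then have "card K = 1" using Suc by simp
      then obtain C where C: "K = {C}" by (rule card_1_singletonE)
      then have "C \<inter> P = P" using PK by auto
      then have hC: "card (C \<inter> P) = card P" by simp
      obtain v where v: "v \<in> W - {x}" "C = br W F x v" using KB C by blast
      have "C \<noteq> br W F x u" using hu hC cP by auto
      then show ?thesis using v hC by auto
    next
      case (Suc m)
      then have "card K = 2" using Kc \<open>card K = Suc n\<close> by simp
      then obtain C1 C2 where K2: "K = {C1, C2}" "C1 \<noteq> C2" by (meson card_2_iff)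
      have "C1 \<inter> C2 = {}" using dj K2 by auto
      then have cu: "card ((C1 \<inter> P) \<union> (C2 \<inter> P)) = card (C1 \<inter> P) + card (C2 \<inter> P)"
        by (intro card_Un_disjoint) (use finP in auto)
      have "(C1 \<inter> P) \<union> (C2 \<inter> P) = P" using PK K2 by auto
      then have sum: "card (C1 \<inter> P) + card (C2 \<inter> P) = card P" using cu by simp
      obtain v1 where v1: "v1 \<in> W - {x}" "C1 = br W F x v1" using KB K2 by blast
      obtain v2 where v2: "v2 \<in> W - {x}" "C2 = br W F x v2" using KB K2 by blast
      show ?thesis
      proof (cases "C1 = br W F x u")
        case True then show ?thesis using v2 K2 sum hu by (intro bexI[of _ v2]) auto
      next
        case f1: False
        show ?thesis
        proof (cases "C2 = br W F x u")
          case True then show ?thesis using v1 K2 sum hu by (intro bexI[of _ v1]) auto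
        next
          case False
          show ?thesis
          proof (cases "card P \<le> 2 * card (C1 \<inter> P)")
            case True then show ?thesis using v1 f1 by auto
          next
            case f3: False
            then show ?thesis using v2 False sum by (intro bexI[of _ v2]) auto
          qed
        qed
      qed
    qed
  qed
qed

definition SS where "SS u x \<longleftrightarrow> {u,x} \<in> F \<and> card P \<le> 2 * card (br W F u x \<inter> P) \<and>
   (card P < 2 * card (br W F u x \<inter> P) \<or> u \<notin> P)"

lemma step:
  assumes nc: "\<And>u. \<not> is_Q_centroid W F P u" and S: "SS u x"
  shows "\<exists>y. SS x y \<and> card (br W F x y) < card (br W F u x)"
proof -
  have e: "{u,x} \<in> F" using S SS_def by auto
  have ex: "u \<noteq> x" "u \<in> W" "x \<in> W" using edge_props[OF ug e] by auto
  have hu: "2 * card (br W F x u \<inter> P) \<le> card P" using split_count[OF e] S unfolding SS_def by auto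
  obtain v where v: "v \<in> W - {x}" "br W F x v \<noteq> br W F x u" "card P \<le> 2 * card (br W F x v \<inter> P)"
    "card P < 2 * card (br W F x v \<inter> P) \<or> x \<notin> P"
  proof (cases "\<exists>v \<in> W - {x}. card P < 2 * card (br W F x v \<inter> P)")
    case True
    then obtain v where v: "v \<in> W - {x}" "card P < 2 * card (br W F x v \<inter> P)" by blast
    then have "br W F x v \<noteq> br W F x u" using hu by auto
    then show ?thesis using v that by auto
  next
    case False
    then have "\<forall>v\<in>W - {x}. 2 * card (br W F x v \<inter> P) \<le> card P" by (auto simp: not_less)
    then have "x \<notin> P" using nc[of x] ex unfolding cent_iff by blast
    then show ?thesis using L[OF ex(3) _ ex(2) ex(1) hu] that by blast
  qed
  obtain y where y: "{x,y} \<in> F" "y \<in> br W F x v" using NBR[OF cn _ _ ex(3)] v by auto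
  have byv: "br W F x y = br W F x v" using br_eq[OF y(2)] .
  have "SS x y" unfolding SS_def using y byv v by auto
  moreover have "br W F x y \<subset> br W F u x"
  proof
    show "br W F x y \<subseteq> br W F u x"
    proof
      fix z assume z: "z \<in> br W F x y"
      then have "z \<in> W" using br_sub by fastforce
      then have "z \<in> br W F u x \<or> z \<in> br W F x u" using UNION[OF cn ex(2,3,1)] by blast
      moreover have "z \<notin> br W F x u" using br_eq z byv v(2) by metis
      ultimately show "z \<in> br W F u x" by blast
    qed
    have "x \<in> br W F u x" using br_self ex by metis
    moreover have "x \<notin> br W F x y" using br_sub by fastforce
    ultimately show "br W F x y \<noteq> br W F u x" by blast
  qed
  then have "card (br W F x y) < card (br W F u x)" using finB psubset_card_mono by blast
  ultimately show ?thesis by blast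
qed

lemma exists_centroid: "\<exists>u. is_Q_centroid W F P u"
proof (rule ccontr)
  assume "\<not> (\<exists>u. is_Q_centroid W F P u)"
  then have nc: "\<And>u. \<not> is_Q_centroid W F P u" by blast
  have main: "\<And>u x. card (br W F u x) = n \<Longrightarrow> SS u x \<Longrightarrow> False" for n
  proof (induction n rule: less_induct)
    case (less n)
    then show ?case using step[OF nc less.prems(2)] by blast
  qed
  obtain p where p: "p \<in> P" using Pne by auto
  have pW: "p \<in> W" using p PW by auto
  have "\<not> (\<forall>v\<in>W - {p}. 2 * card (br W F p v \<inter> P) \<le> card P)"
    using nc[of p] p pW unfolding cent_iff by blast
  then obtain v where v0: "v \<in> W - {p}" "\<not> 2 * card (br W F p v \<inter> P) \<le> card P" by blast
  then have v: "v \<in> W - {p}" "card P < 2 * card (br W F p v \<inter> P)" by auto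
  obtain y where y: "{p,y} \<in> F" "y \<in> br W F p v" using NBR[OF cn _ _ pW] v by auto
  have "br W F p y = br W F p v" using br_eq[OF y(2)] .
  then have "SS p y" unfolding SS_def using y v by auto
  then show False using main by blast
qed

lemma two:
  assumes u: "is_Q_centroid W F P u" and v: "is_Q_centroid W F P v" and uv: "u \<noteq> v"
  shows "2 * card (br W F u v \<inter> P) = card P" "br W F u v \<inter> br W F v u \<inter> P = {}"
proof -
  have uW: "u \<in> W" "v \<in> W" using u v unfolding cent_iff by auto
  have h1: "2 * card (br W F u v \<inter> P) \<le> card P" using u uW uv unfolding cent_iff by auto
  have h2: "2 * card (br W F v u \<inter> P) \<le> card P" using v uW uv unfolding cent_iff by auto
  have "P = (br W F u v \<inter> P) \<union> (br W F v u \<inter> P)" using UNION[OF cn uW uv] PW by blast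
  moreover have "card ((br W F u v \<inter> P) \<union> (br W F v u \<inter> P)) + card ((br W F u v \<inter> P) \<inter> (br W F v u \<inter> P)) = card (br W F u v \<inter> P) + card (br W F v u \<inter> P)"
    by (rule card_Un_Int[symmetric]) (use finP in auto)
  ultimately have "card P + card ((br W F u v \<inter> P) \<inter> (br W F v u \<inter> P)) = card (br W F u v \<inter> P) + card (br W F v u \<inter> P)"
    by simp
  then have a: "card ((br W F u v \<inter> P) \<inter> (br W F v u \<inter> P)) = 0" and b: "2 * card (br W F u v \<inter> P) = card P"
    using h1 h2 by auto
  show "2 * card (br W F u v \<inter> P) = card P" using b .
  have "finite ((br W F u v \<inter> P) \<inter> (br W F v u \<inter> P))" using finP by auto
  then show "br W F u v \<inter> br W F v u \<inter> P = {}" using a by auto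
qed

lemma same_branch:
  assumes u: "is_Q_centroid W F P u" and v: "is_Q_centroid W F P v" and w: "is_Q_centroid W F P w"
    and d: "u \<noteq> v" "u \<noteq> w"
  shows "br W F u v = br W F u w"
proof (rule ccontr)
  assume ne: "br W F u v \<noteq> br W F u w"
  have uW: "u \<in> W" "v \<in> W" "w \<in> W" "u \<in> P" using u v w unfolding cent_iff by auto
  have dj: "br W F u v \<inter> br W F u w = {}" using ne br_disj[of W F u v w] by simp
  have "(br W F u v \<inter> P) \<union> (br W F u w \<inter> P) \<subseteq> P - {u}" using br_sub by fastforce
  then have "card ((br W F u v \<inter> P) \<union> (br W F u w \<inter> P)) \<le> card (P - {u})"
    using finP by (intro card_mono) auto
  also have "card (P - {u}) = card P - 1" using uW(4) by (rule card_Diff_singleton)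
  finally have "card ((br W F u v \<inter> P) \<union> (br W F u w \<inter> P)) \<le> card P - 1" .
  moreover have "card ((br W F u v \<inter> P) \<union> (br W F u w \<inter> P)) = card (br W F u v \<inter> P) + card (br W F u w \<inter> P)"
    using dj finP by (intro card_Un_disjoint) auto
  moreover have "card P > 0" using finP Pne by auto
  ultimately show False using two(1)[OF u v d(1)] two(1)[OF u w d(2)] by linarith
qed

lemma no_three:
  assumes u: "is_Q_centroid W F P u" and v: "is_Q_centroid W F P v" and w: "is_Q_centroid W F P w"
    and d: "u \<noteq> v" "u \<noteq> w" "v \<noteq> w"
  shows False
proof -
  have wW: "w \<in> W" "w \<in> P" using w unfolding cent_iff by auto
  have "w \<in> br W F u w" "w \<in> br W F v w" "w \<in> P"
    using br_self[OF wW(1), of u F] br_self[OF wW(1), of v F] d wW(2) by auto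
  moreover have "br W F u w = br W F u v" using same_branch[OF u v w d(1,2)] by simp
  moreover have "br W F v w = br W F v u" using same_branch[OF v u w _ d(3)] d(1) by simp
  ultimately show False using two(2)[OF u v d(1)] by blast
qed

lemma final: "card {u. is_Q_centroid W F P u} \<in> {1, 2}"
proof -
  let ?S = "{u. is_Q_centroid W F P u}"
  have fin: "finite ?S" using finW unfolding is_Q_centroid_def by (auto intro: finite_subset)
  have "?S \<noteq> {}" using exists_centroid by auto
  then have g: "card ?S \<ge> 1" using fin by (simp add: Suc_leI card_gt_0_iff)
  have "card ?S \<le> 2"
  proof (rule ccontr)
    assume "\<not> card ?S \<le> 2"
    then have "3 \<le> card ?S" by simp
    then have "?S \<noteq> {}" by (metis card.empty not_numeral_le_zero)
    then obtain a where a: "a \<in> ?S" by blast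
    have c1: "card (?S - {a}) \<ge> 2" using \<open>3 \<le> card ?S\<close> card_Diff_singleton[OF a] by simp
    then have "?S - {a} \<noteq> {}" by (metis card.empty not_numeral_le_zero)
    then obtain b where b: "b \<in> ?S - {a}" by blast
    have "card (?S - {a} - {b}) \<ge> 1" using c1 card_Diff_singleton[OF b] by simp
    then have "?S - {a} - {b} \<noteq> {}" by (metis card.empty not_one_le_zero)
    then obtain c where c: "c \<in> ?S - {a} - {b}" by blast
    show False using no_three[of a b c] a b c by blast
  qed
  then show ?thesis using g by auto
qed

end


theorem mainTheorem7:
  fixes V :: "'a set" and E :: "'a set set" and r :: 'a and Q :: "'a set"
    and VZ :: "'a set" and EZ :: "'a set set"
  assumes "tree V E"
    and "r \<in> V"
    and "Q \<subseteq> V" and "Q \<noteq> {}"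
    and "connected_subgraph V E VZ EZ"
    and "(Q \<union> A_Q V E r Q) \<inter> VZ \<noteq> {}"
  shows "card {u. is_Q_centroid VZ EZ ((Q \<union> A_Q V E r Q) \<inter> VZ) u} \<in> {1, 2}"
proof -
  define P where "P = (Q \<union> A_Q V E r Q) \<inter> VZ"
  have ugZ: "ugraph VZ EZ" and cZ: "connected_graph VZ EZ"
    using assms(5) by (auto simp: connected_subgraph_def)
  have acZ: "\<not> (\<exists>xs. is_cycle VZ EZ xs)" using sub_ac[OF assms(1,5)] .
  have PW: "P \<subseteq> VZ" unfolding P_def by blast
  have Pne: "P \<noteq> {}" unfolding P_def using assms(6) .
  have Hy: "card {C \<in> components (VZ - {x}) (delete_vertex_edges EZ x). C \<inter> P \<noteq> {}} \<le> 2"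
    if xW: "x \<in> VZ" and xP: "x \<notin> P" for x
  proof -
    have xQ: "x \<notin> Q \<union> A_Q V E r Q" using xW xP unfolding P_def by blast
    show ?thesis by (rule H[OF assms(1,2,3,5) xW xQ P_def])
  qed
  have "card {u. is_Q_centroid VZ EZ P u} \<in> {1, 2}"
    by (rule final[OF ugZ cZ acZ PW Pne Hy])
  then show ?thesis unfolding P_def .
qed

end
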